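(* Let $G$ be a graph on $[n]$. If $G$ is 2-connected and crossing closed, then $G$ is tightly closed.
   Context: Graphs are finite simple graphs with vertex set $[n]$; edges are written $ij$ with $i<j$. Two edges $a_1a_2$ and $b_1b_2$ cross if $a_1<b_1<a_2<b_2$ or $b_1<a_1<b_2<a_2$. Two crossing edges $e,f$ are crossing closed if among all induced connected subgraphs of $G$ containing $e$ and $f$ there is a unique minimal one under containment, denoted $J(e,f)$; $G$ is crossing closed if all pairs of crossing edges are. $G$ is tightly closed if it is crossing closed and for all crossing edges $e,f$, $J(e,f)$ is a subgraph of $K_4$ (i.e. has exactly the four endpoints of $e$ and $f$ as vertices). *)

theory Defs
  imports Main
begin

definition graph_on :: "nat \<Rightarrow> (nat \<times> nat) set \<Rightarrow> bool" where
  "graph_on n E \<longleftrightarrow> (\<forall>(i,j)\<in>E. 1 \<le> i \<and> i < j \<and> j \<le> n)"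

definition adj :: "(nat \<times> nat) set \<Rightarrow> nat \<Rightarrow> nat \<Rightarrow> bool" where
  "adj E u v \<longleftrightarrow> (u,v) \<in> E \<or> (v,u) \<in> E"

definition connected_on :: "(nat \<times> nat) set \<Rightarrow> nat set \<Rightarrow> bool" where
  "connected_on E S \<longleftrightarrow> S \<noteq> {} \<and>
     (\<forall>u\<in>S. \<forall>v\<in>S. (u,v) \<in> {(x,y). x \<in> S \<and> y \<in> S \<and> adj E x y}\<^sup>*)"

definition two_connected :: "nat \<Rightarrow> (nat \<times> nat) set \<Rightarrow> bool" where
  "two_connected n E \<longleftrightarrow> n \<ge> 3 \<and> connected_on E {1..n} \<and>
     (\<forall>v\<in>{1..n}. connected_on E ({1..n} - {v}))"

definition crossing :: "nat \<times> nat \<Rightarrow> nat \<times> nat \<Rightarrow> bool" where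
  "crossing e f \<longleftrightarrow> (case e of (a1,a2) \<Rightarrow> case f of (b1,b2) \<Rightarrow>
     (a1 < b1 \<and> b1 < a2 \<and> a2 < b2) \<or> (b1 < a1 \<and> a1 < b2 \<and> b2 < a2))"

definition endpoints :: "nat \<times> nat \<Rightarrow> nat set" where
  "endpoints e = {fst e, snd e}"

definition admissible :: "nat \<Rightarrow> (nat \<times> nat) set \<Rightarrow> nat \<times> nat \<Rightarrow> nat \<times> nat \<Rightarrow> nat set \<Rightarrow> bool" where
  "admissible n E e f S \<longleftrightarrow> S \<subseteq> {1..n} \<and> endpoints e \<subseteq> S \<and> endpoints f \<subseteq> S \<and> connected_on E S"

definition minimal_adm :: "nat \<Rightarrow> (nat \<times> nat) set \<Rightarrow> nat \<times> nat \<Rightarrow> nat \<times> nat \<Rightarrow> nat set \<Rightarrow> bool" where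
  "minimal_adm n E e f S \<longleftrightarrow> admissible n E e f S \<and> (\<forall>T. T \<subset> S \<longrightarrow> \<not> admissible n E e f T)"

definition crossing_closed_pair :: "nat \<Rightarrow> (nat \<times> nat) set \<Rightarrow> nat \<times> nat \<Rightarrow> nat \<times> nat \<Rightarrow> bool" where
  "crossing_closed_pair n E e f \<longleftrightarrow> (\<exists>!S. minimal_adm n E e f S)"

(* vertex set of J(e,f) (induced subgraph, so determined by its vertex set) *)
definition J :: "nat \<Rightarrow> (nat \<times> nat) set \<Rightarrow> nat \<times> nat \<Rightarrow> nat \<times> nat \<Rightarrow> nat set" where
  "J n E e f = (THE S. minimal_adm n E e f S)"

definition crossing_closed :: "nat \<Rightarrow> (nat \<times> nat) set \<Rightarrow> bool" where
  "crossing_closed n E \<longleftrightarrow>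
     (\<forall>e\<in>E. \<forall>f\<in>E. crossing e f \<longrightarrow> crossing_closed_pair n E e f)"

definition tightly_closed :: "nat \<Rightarrow> (nat \<times> nat) set \<Rightarrow> bool" where
  "tightly_closed n E \<longleftrightarrow> crossing_closed n E \<and>
     (\<forall>e\<in>E. \<forall>f\<in>E. crossing e f \<longrightarrow> J n E e f = endpoints e \<union> endpoints f)"

end

theory Submission
  imports Defs
begin

lemma min_below:
  assumes "admissible n E e f T"
  shows "\<exists>U. U \<subseteq> T \<and> minimal_adm n E e f U"
proof -
  obtain U where U: "admissible n E e f U \<and> U \<subseteq> T"
    and m: "\<forall>W. admissible n E e f W \<and> W \<subseteq> T \<longrightarrow> card U \<le> card W"
    using ex_has_least_nat[of "\<lambda>U. admissible n E e f U \<and> U \<subseteq> T" T card] assms by blast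
  have fin: "finite U" using U unfolding admissible_def by (meson finite_atLeastAtMost finite_subset)
  have "\<forall>W. W \<subset> U \<longrightarrow> \<not> admissible n E e f W"
  proof (intro allI impI notI)
    fix W assume "W \<subset> U" "admissible n E e f W"
    then have "card W < card U" using fin psubset_card_mono by blast
    moreover have "card U \<le> card W" using m \<open>W \<subset> U\<close> \<open>admissible n E e f W\<close> U by blast
    ultimately show False by simp
  qed
  then show ?thesis using U unfolding minimal_adm_def by blast
qed

theorem proposition5p14:
  fixes n :: nat and E :: "(nat \<times> nat) set"
  assumes "graph_on n E"
    and "two_connected n E"
    and "crossing_closed n E"
  shows "tightly_closed n E"
  unfolding tightly_closed_def
proof (intro conjI assms(3) ballI impI)
  fix e f assume e: "e \<in> E" and f: "f \<in> E" and c: "crossing e f"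
  have "crossing_closed_pair n E e f" using assms(3) e f c unfolding crossing_closed_def by blast
  then obtain S where S: "minimal_adm n E e f S" and uq: "\<And>S'. minimal_adm n E e f S' \<Longrightarrow> S' = S"
    unfolding crossing_closed_pair_def by blast
  have JS: "J n E e f = S" unfolding J_def using S uq by (rule the_equality)
  have adS: "admissible n E e f S" using S unfolding minimal_adm_def by blast
  have epn1: "endpoints x \<subseteq> {1..n}" if "x \<in> E" for x
  proof -
    obtain a b where x: "x = (a,b)" by (cases x)
    have "1 \<le> a \<and> a < b \<and> b \<le> n" using assms(1) that x unfolding graph_on_def by fastforce
    then show ?thesis unfolding endpoints_def x by auto
  qed
  have epn: "endpoints e \<subseteq> {1..n}" "endpoints f \<subseteq> {1..n}" using epn1 e f by auto
  have "S \<subseteq> endpoints e \<union> endpoints f"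
  proof
    fix v assume v: "v \<in> S"
    show "v \<in> endpoints e \<union> endpoints f"
    proof (rule ccontr)
      assume nv: "v \<notin> endpoints e \<union> endpoints f"
      have vn: "v \<in> {1..n}" using v adS unfolding admissible_def by blast
      have "connected_on E ({1..n} - {v})" using assms(2) vn unfolding two_connected_def by blast
      moreover have "endpoints e \<subseteq> {1..n} - {v}" "endpoints f \<subseteq> {1..n} - {v}" using epn nv by auto
      ultimately have "admissible n E e f ({1..n} - {v})"
        unfolding admissible_def by blast
      then obtain U where U1: "U \<subseteq> {1..n} - {v}" and U2: "minimal_adm n E e f U"
        using min_below[of n E e f "{1..n} - {v}"] by blast
      have "U = S" using U2 by (rule uq)
      then show False using U1 v by blast
    qed
  qed
  moreover have "endpoints e \<union> endpoints f \<subseteq> S" using adS unfolding admissible_def by blast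
  ultimately show "J n E e f = endpoints e \<union> endpoints f" using JS by blast
qed

end
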